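(* Let $X$ be a graph with real symmetric Hamiltonian $M$ and transition matrix $U(t)=e^{-\mathrm{i}tM}$. Let $a\ne b$ be cospectral vertices of $X$ and $s\in\mathbb{C}\setminus\{0\}$. If $\mathbf e_a+s\mathbf e_b$ is periodic at time $\tau$, i.e. $U(\tau)(\mathbf e_a+s\mathbf e_b)=\eta(\mathbf e_a+s\mathbf e_b)$ for some $|\eta|=1$, then either $s=\pm1$, or both $a$ and $b$ are periodic at time $\tau$, i.e. $U(\tau)\mathbf e_a=\eta\mathbf e_a$ and $U(\tau)\mathbf e_b=\eta\mathbf e_b$.
   Context: Vertices $a,b$ are cospectral (with respect to $M$) if $(M^h)_{a,a}=(M^h)_{b,b}$ for all integers $h\ge0$, equivalently $(E_\lambda)_{a,a}=(E_\lambda)_{b,b}$ for every spectral projection $E_\lambda$ of $M$. *)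

theory Defs
  imports "HOL-Analysis.Analysis"
begin

definition mpow :: "'a::semiring_1^'n^'n \<Rightarrow> nat \<Rightarrow> 'a^'n^'n" where
  "mpow A k = ((\<lambda>B. A ** B) ^^ k) (mat 1)"

definition mexp :: "complex^'n^'n \<Rightarrow> complex^'n^'n" where
  "mexp A = (\<Sum>k. (inverse (fact k) :: real) *\<^sub>R mpow A k)"

definition transition :: "real^'n^'n \<Rightarrow> real \<Rightarrow> complex^'n^'n" where
  "transition M t = mexp (\<chi> i j. - \<i> * complex_of_real t * complex_of_real (M $ i $ j))"

definition evec :: "'n \<Rightarrow> complex^'n" where
  "evec a = (\<chi> i. if i = a then 1 else 0)"

definition cospectral :: "real^'n^'n \<Rightarrow> 'n \<Rightarrow> 'n \<Rightarrow> bool" where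
  "cospectral M a b \<longleftrightarrow> (\<forall>h. mpow M h $ a $ a = mpow M h $ b $ b)"

end

theory Submission
  imports Defs
begin
lemma mpow_Suc: "mpow A (Suc k) = A ** mpow A k"
  by (simp add: mpow_def)
lemma mpow_0: "mpow A 0 = mat 1"
  by (simp add: mpow_def)

lemma mpow_comm: "mpow A k ** A = A ** mpow A k"
proof (induction k)
  case 0 then show ?case by (simp add: mpow_0)
next
  case (Suc k)
  have "mpow A (Suc k) ** A = A ** (mpow A k ** A)" by (simp add: mpow_Suc matrix_mul_assoc)
  also have "\<dots> = A ** mpow A (Suc k)" using Suc by (simp add: mpow_Suc)
  finally show ?case .
qed

lemma mpow_add: "mpow A p ** mpow A q = mpow A (p + q)"
proof (induction p)
  case 0 then show ?case by (simp add: mpow_0)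
next
  case (Suc p)
  have "mpow A (Suc p) ** mpow A q = A ** (mpow A p ** mpow A q)" by (simp add: mpow_Suc matrix_mul_assoc)
  then show ?case using Suc by (simp add: mpow_Suc)
qed

lemma mpow_sym: fixes A :: "'a::comm_semiring_1^'n^'n" assumes "transpose A = A" shows "transpose (mpow A k) = mpow A k"
proof (induction k)
  case 0 then show ?case by (simp add: mpow_0)
next
  case (Suc k)
  have "transpose (mpow A (Suc k)) = transpose (mpow A k) ** transpose A" by (simp add: mpow_Suc matrix_transpose_mul)
  then show ?case using Suc assms by (simp add: mpow_Suc mpow_comm)
qed

lemma mpow_scale:
  "mpow (\<chi> i j. z * complex_of_real (M$i$j)) k $ i $ j = z^k * complex_of_real (mpow M k $ i $ j)"
proof (induction k arbitrary: i j)
  case 0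
  then show ?case by (simp add: mpow_0 mat_def)
next
  case (Suc k)
  then show ?case by (simp add: mpow_Suc matrix_matrix_mult_def sum_distrib_left mult_ac)
qed

lemma mpow_bound:
  fixes M :: "real^'n^'n"
  shows "\<bar>mpow M k $ i $ j\<bar> \<le> (\<Sum>i\<in>UNIV. \<Sum>j\<in>UNIV. \<bar>M$i$j\<bar>) ^ k"
proof (induction k arbitrary: i j)
  case 0
  then show ?case by (simp add: mpow_0 mat_def)
next
  case (Suc k)
  define S where "S = (\<Sum>i\<in>UNIV. \<Sum>j\<in>UNIV. \<bar>M$i$j\<bar>)"
  have "\<bar>mpow M (Suc k) $ i $ j\<bar> = \<bar>\<Sum>l\<in>UNIV. M$i$l * mpow M k $ l $ j\<bar>"
    by (simp add: mpow_Suc matrix_matrix_mult_def)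
  also have "\<dots> \<le> (\<Sum>l\<in>UNIV. \<bar>M$i$l\<bar> * S^k)"
    by (rule order_trans[OF sum_abs]) (auto intro!: sum_mono mult_left_mono simp: abs_mult Suc[unfolded S_def[symmetric]])
  also have "\<dots> = (\<Sum>l\<in>UNIV. \<bar>M$i$l\<bar>) * S^k" by (simp add: sum_distrib_right)
  also have "\<dots> \<le> S * S^k"
  proof (rule mult_right_mono)
    show "(\<Sum>l\<in>UNIV. \<bar>M$i$l\<bar>) \<le> S" unfolding S_def
      by (rule member_le_sum[where f="\<lambda>i. \<Sum>l\<in>UNIV. \<bar>M$i$l\<bar>"]) (auto intro: sum_nonneg)
    show "0 \<le> S^k" unfolding S_def by (auto intro!: zero_le_power sum_nonneg)
  qed
  finally show ?case by (simp add: S_def)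
qed

definition gser :: "complex \<Rightarrow> real^'n^'n \<Rightarrow> 'n \<Rightarrow> 'n \<Rightarrow> nat \<Rightarrow> complex" where
  "gser z M i j k = complex_of_real (inverse (fact k)) * z^k * complex_of_real (mpow M k $ i $ j)"

lemma gser_abs: "summable (\<lambda>k. norm (gser z M i j k))"
proof -
  define S where "S = (\<Sum>i\<in>UNIV. \<Sum>j\<in>UNIV. \<bar>M$i$j\<bar>)"
  have "summable (\<lambda>k. (cmod z * S) ^ k /\<^sub>R fact k)" by (rule summable_exp_generic)
  moreover have "norm (norm (gser z M i j k)) \<le> (cmod z * S) ^ k /\<^sub>R fact k" for k
  proof -
    have "norm (norm (gser z M i j k)) = inverse (fact k) * cmod z ^ k * \<bar>mpow M k $ i $ j\<bar>"
      by (simp add: gser_def norm_mult norm_power norm_inverse)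
    also have "\<dots> \<le> inverse (fact k) * cmod z ^ k * S ^ k"
      using mpow_bound[of M k i j] by (intro mult_left_mono) (auto simp: S_def)
    also have "\<dots> = (cmod z * S) ^ k /\<^sub>R fact k" by (simp add: power_mult_distrib divide_inverse mult_ac)
    finally show ?thesis .
  qed
  ultimately show ?thesis by (rule summable_comparison_test'[where N=0]) 
qed

lemma norm_vec_le_sum: "norm (x::'a::real_normed_vector^'n) \<le> (\<Sum>i\<in>UNIV. norm (x$i))"
  unfolding norm_vec_def by (rule L2_set_le_sum) auto

lemma transition_entry:
  "transition M \<tau> $ i $ j = (\<Sum>k. gser (- \<i> * complex_of_real \<tau>) M i j k)"
proof -
  define z where "z = - \<i> * complex_of_real \<tau>"
  define f where "f k = (inverse (fact k) :: real) *\<^sub>R mpow (\<chi> i j. z * complex_of_real (M $ i $ j)) k" for k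
  have fe: "f k $ i $ j = gser z M i j k" for k i j
  proof -
    have "f k $ i $ j = (inverse (fact k) :: real) *\<^sub>R (mpow (\<chi> i j. z * complex_of_real (M $ i $ j)) k $ i $ j)"
      by (simp add: f_def)
    then show ?thesis by (simp only: mpow_scale gser_def scaleR_conv_of_real mult.assoc)
  qed
  have sg: "summable (\<lambda>k. gser z M i j k)" for i j
    using gser_abs summable_norm_cancel by blast
  have "summable f"
  proof (rule summable_comparison_test'[where N=0])
    show "summable (\<lambda>k. \<Sum>i\<in>UNIV. \<Sum>j\<in>UNIV. norm (gser z M i j k))"
      by (intro summable_sum gser_abs)
    show "norm (f k) \<le> (\<Sum>i\<in>UNIV. \<Sum>j\<in>UNIV. norm (gser z M i j k))" for k
    proof -
      have "norm (f k) \<le> (\<Sum>i\<in>UNIV. norm (f k $ i))" by (rule norm_vec_le_sum)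
      also have "\<dots> \<le> (\<Sum>i\<in>UNIV. \<Sum>j\<in>UNIV. norm (f k $ i $ j))"
        by (intro sum_mono norm_vec_le_sum)
      finally show ?thesis by (simp add: fe)
    qed
  qed
  have s1: "summable (\<lambda>k. f k $ i)"
    using bounded_linear.summable[OF bounded_linear_vec_nth \<open>summable f\<close>] .
  have "transition M \<tau> = suminf f" unfolding transition_def mexp_def f_def z_def by (rule refl)
  also have "\<dots> $ i = (\<Sum>k. f k $ i)"
    using bounded_linear.suminf[OF bounded_linear_vec_nth \<open>summable f\<close>] by simp
  finally have "transition M \<tau> $ i $ j = (\<Sum>k. f k $ i) $ j" by simp
  also have "\<dots> = (\<Sum>k. f k $ i $ j)"
    using bounded_linear.suminf[OF bounded_linear_vec_nth s1] by simp
  finally show ?thesis by (simp add: fe z_def)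
qed

lemma gser_cnj: "cnj (gser z M i j k) = gser (cnj z) M i j k"
  by (simp add: gser_def)

lemma transition_cnj:
  "cnj (transition M \<tau> $ i $ j) = (\<Sum>k. gser (\<i> * complex_of_real \<tau>) M i j k)"
proof -
  have "summable (gser (- \<i> * complex_of_real \<tau>) M i j)"
    using gser_abs summable_norm_cancel by blast
  then have "gser (- \<i> * complex_of_real \<tau>) M i j sums transition M \<tau> $ i $ j"
    by (simp add: transition_entry summable_sums)
  then have "(\<lambda>k. cnj (gser (- \<i> * complex_of_real \<tau>) M i j k)) sums cnj (transition M \<tau> $ i $ j)"
    by (simp only: sums_cnj)
  then show ?thesis by (simp add: gser_cnj sums_iff)
qed

lemma gser_prod:
  assumes sym: "transpose M = M" and pm: "p \<le> m"
  shows "gser (- z) M l a p * gser z M l a (m - p) =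
     of_nat (m choose p) * ((-1)^p * (z^m / fact m)) * complex_of_real (mpow M p $ a $ l * mpow M (m - p) $ l $ a)"
proof -
  have s: "mpow M p $ l $ a = mpow M p $ a $ l"
  proof -
    have "mpow M p $ a $ l = transpose (mpow M p) $ a $ l" using mpow_sym[OF sym, of p] by simp
    then show ?thesis by (simp add: transpose_def)
  qed
  have b: "(of_nat (m choose p) :: complex) = fact m / (fact p * fact (m - p))"
    by (rule binomial_fact[OF pm])
  have zm: "z^m = z^p * z^(m-p)" using pm by (simp add: power_add[symmetric])
  have "(-z)^p = (-1)^p * z^p" by (rule power_minus)
  moreover have "(fact m / (fact p * fact (m - p)) :: complex) * ((-1)^p * (z^p * z^(m-p) / fact m))
       = (-1)^p * z^p * z^(m-p) * (inverse (fact p) * inverse (fact (m - p)))"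
    by (simp add: divide_inverse mult_ac)
  ultimately show ?thesis unfolding gser_def s b zm
    by (simp add: of_real_inverse mult_ac)
qed

lemma unit_col:
  assumes sym: "transpose M = M"
  shows "(\<Sum>l\<in>UNIV. cnj (transition M \<tau> $ l $ a) * transition M \<tau> $ l $ a) = 1"
proof -
  define z where "z = - \<i> * complex_of_real \<tau>"
  have mz: "\<i> * complex_of_real \<tau> = - z" by (simp add: z_def)
  have cp: "(\<lambda>m. \<Sum>p\<le>m. gser (- z) M l a p * gser z M l a (m - p)) sums
      (cnj (transition M \<tau> $ l $ a) * transition M \<tau> $ l $ a)" for l
    unfolding transition_cnj mz unfolding transition_entry z_def[symmetric]
    by (rule Cauchy_product_sums[OF gser_abs gser_abs])
  have ss: "(\<lambda>m. \<Sum>l\<in>UNIV. \<Sum>p\<le>m. gser (- z) M l a p * gser z M l a (m - p)) sums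
      (\<Sum>l\<in>UNIV. cnj (transition M \<tau> $ l $ a) * transition M \<tau> $ l $ a)"
    by (rule sums_sum) (rule cp)
  have tm: "(\<Sum>l\<in>UNIV. \<Sum>p\<le>m. gser (- z) M l a p * gser z M l a (m - p))
      = (if m = 0 then 1 else 0)" for m
  proof -
    have "(\<Sum>l\<in>UNIV. \<Sum>p\<le>m. gser (- z) M l a p * gser z M l a (m - p))
       = (\<Sum>p\<le>m. \<Sum>l\<in>UNIV. gser (- z) M l a p * gser z M l a (m - p))"
      by (rule sum.swap)
    also have "\<dots> = (\<Sum>p\<le>m. of_nat (m choose p) * ((-1)^p * (z^m / fact m)) *
         complex_of_real (\<Sum>l\<in>UNIV. mpow M p $ a $ l * mpow M (m - p) $ l $ a))"
      by (intro sum.cong refl) (simp add: gser_prod[OF sym] sum_distrib_left)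
    also have "\<dots> = (\<Sum>p\<le>m. (-1)^p * of_nat (m choose p)) * (z^m / fact m * complex_of_real (mpow M m $ a $ a))"
    proof -
      have "(\<Sum>l\<in>UNIV. mpow M p $ a $ l * mpow M (m - p) $ l $ a) = mpow M m $ a $ a" if "p \<le> m" for p
        using mpow_add[of M p "m - p"] that by (simp add: matrix_matrix_mult_def vec_eq_iff)
      then have "(\<Sum>p\<le>m. of_nat (m choose p) * ((-1)^p * (z^m / fact m)) *
         complex_of_real (\<Sum>l\<in>UNIV. mpow M p $ a $ l * mpow M (m - p) $ l $ a))
        = (\<Sum>p\<le>m. ((-1)^p * of_nat (m choose p)) * (z^m / fact m * complex_of_real (mpow M m $ a $ a)))"
        by (intro sum.cong refl) (simp only: atMost_iff mult_ac)
      then show ?thesis by (simp only: sum_distrib_right)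
    qed
    also have "\<dots> = (if m = 0 then 1 else 0)"
      by (cases "m = 0") (simp_all add: choose_alternating_sum mpow_0 mat_def)
    finally show ?thesis .
  qed
  have "(\<lambda>m. if m = 0 then 1 else 0) sums (1::complex)"
    using sums_single[of 0 "\<lambda>_. 1::complex"] by simp
  with ss show ?thesis unfolding tm using sums_unique2 by blast
qed

lemma cnj_mult_self: "cnj x * x = complex_of_real ((cmod x)^2)"
  using complex_norm_square[of x] by (simp add: mult.commute)

lemma mv_evec: "(A *v evec c) $ i = A $ i $ c"
  by (simp add: matrix_vector_mult_def evec_def if_distrib cong: if_cong)

lemma col_fixed:
  assumes sym: "transpose M = M" and e: "transition M \<tau> $ c $ c = \<eta>" and n: "cmod \<eta> = 1"
  shows "transition M \<tau> *v evec c = \<eta> *s evec c"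
proof -
  define T where "T = transition M \<tau>"
  have "(\<Sum>l\<in>UNIV. cnj (T $ l $ c) * T $ l $ c) = 1" using unit_col[OF sym] by (simp add: T_def)
  then have "complex_of_real (\<Sum>l\<in>UNIV. (cmod (T $ l $ c))^2) = 1"
    by (simp only: cnj_mult_self of_real_sum)
  then have s1: "(\<Sum>l\<in>UNIV. (cmod (T $ l $ c))^2) = 1" using of_real_eq_1_iff by blast
  have "(\<Sum>l\<in>UNIV. (cmod (T $ l $ c))^2) = (cmod (T $ c $ c))^2 + (\<Sum>l\<in>UNIV - {c}. (cmod (T $ l $ c))^2)"
    by (simp add: sum.remove)
  then have "(\<Sum>l\<in>UNIV - {c}. (cmod (T $ l $ c))^2) = 0" using s1 e n by (simp add: T_def)
  then have z: "\<forall>l\<in>UNIV - {c}. (cmod (T $ l $ c))^2 = 0"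
    by (subst sum_nonneg_eq_0_iff[symmetric]) auto
  show ?thesis
  proof (subst vec_eq_iff, intro allI)
    fix i
    show "(transition M \<tau> *v evec c) $ i = (\<eta> *s evec c) $ i"
    proof -
      have "(transition M \<tau> *v evec c) $ i = T $ i $ c" by (simp only: mv_evec T_def)
      then show ?thesis using z e by (cases "i = c") (auto simp: evec_def T_def)
    qed
  qed
qed

theorem mainTheorem3:
  fixes M :: "real^'n^'n" and a b :: 'n and s \<eta> :: complex and \<tau> :: real
  assumes "transpose M = M"
    and "a \<noteq> b"
    and "cospectral M a b"
    and "s \<noteq> 0"
    and "cmod \<eta> = 1"
    and "transition M \<tau> *v (evec a + s *s evec b) = \<eta> *s (evec a + s *s evec b)"
  shows "s = 1 \<or> s = -1 \<or>
         (transition M \<tau> *v evec a = \<eta> *s evec a \<and> transition M \<tau> *v evec b = \<eta> *s evec b)"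
proof -
  define T where "T = transition M \<tau>"
  define z where "z = - \<i> * complex_of_real \<tau>"
  have symm: "mpow M k $ i $ j = mpow M k $ j $ i" for k i j
  proof -
    have "mpow M k $ i $ j = transpose (mpow M k) $ i $ j" using mpow_sym[OF assms(1), of k] by simp
    then show ?thesis by (simp add: transpose_def)
  qed
  have Tab: "T $ a $ b = T $ b $ a"
    unfolding T_def transition_entry gser_def using symm by simp
  have Tdiag: "T $ a $ a = T $ b $ b"
    unfolding T_def transition_entry gser_def using assms(3) by (simp add: cospectral_def)
  have lin: "T *v (evec a + s *s evec b) = T *v evec a + s *s (T *v evec b)"
    by (simp add: vec_eq_iff matrix_vector_mult_def sum.distrib sum_distrib_left algebra_simps)
  have ea: "T $ a $ a + s * T $ a $ b = \<eta>"
    using arg_cong[OF assms(6)[folded T_def], of "\<lambda>v. v $ a"] assms(2) unfolding lin vector_add_component vector_smult_component mv_evec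
    by (simp add: evec_def)
  have eb: "T $ b $ a + s * T $ b $ b = \<eta> * s"
    using arg_cong[OF assms(6)[folded T_def], of "\<lambda>v. v $ b"] assms(2) unfolding lin vector_add_component vector_smult_component mv_evec
    by (simp add: evec_def)
  have "T $ a $ b * (1 - s^2) = 0"
  proof -
    have "T $ a $ b * (1 - s^2) = (T $ b $ a + s * T $ b $ b) - s * (T $ a $ a + s * T $ a $ b)"
      using Tab Tdiag by (simp add: algebra_simps power2_eq_square)
    also have "\<dots> = 0" using ea eb by simp
    finally show ?thesis .
  qed
  then consider "1 - s^2 = 0" | "T $ a $ b = 0" by auto
  then show ?thesis
  proof cases
    case 1
    then have "(s - 1) * (s + 1) = 0" by (simp add: algebra_simps power2_eq_square)
    then have "s - 1 = 0 \<or> s + 1 = 0" by simp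
    moreover have "s + 1 = 0 \<Longrightarrow> s = -1" by (simp add: eq_neg_iff_add_eq_0)
    ultimately have "s = 1 \<or> s = -1" by auto
    then show ?thesis by blast
  next
    case 2
    then have "T $ a $ a = \<eta>" "T $ b $ b = \<eta>" using ea Tdiag by auto
    then show ?thesis using col_fixed[OF assms(1) _ assms(5)] by (simp add: T_def)
  qed
qed
end
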